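(* There is $N_0$ such that for all $N \geq N_0$, \[ \psi(N,6,3) \geq 1.2228. \]
   Context: $[N] = \{1,2,\dots,N\}$. For positive integers $K$ and $h \geq 3$, let $\mathcal{F}_{K,h}$ be the set of all functions $F(x) = \sum_{j=1}^K b_j \cos(jx)$ with real coefficients satisfying $\sum_{j=1}^K |b_j| = \frac{1}{\cos(\pi/h)}$. For nonempty $A \subseteq [N]$ and $F \in \mathcal{F}_{K,h}$ let $w_F(A) = \sum_{a \in A} F\!\left( \left(a - \frac{N+1}{2}\right) \frac{2\pi}{hN} \right)$, and let \[ \psi(N,K,h) = \min_{\emptyset \neq A \subseteq [N]} \sup \left\{ \frac{w_F(A)}{|A|} : F \in \mathcal{F}_{K,h} \right\}. \] *)

theory Defs
  imports "HOL-Analysis.Analysis"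
begin

definition cospoly :: "nat \<Rightarrow> (nat \<Rightarrow> real) \<Rightarrow> real \<Rightarrow> real" where
  "cospoly K b x = (\<Sum>j=1..K. b j * cos (real j * x))"

definition FKh :: "nat \<Rightarrow> nat \<Rightarrow> (real \<Rightarrow> real) set" where
  "FKh K h = {cospoly K b | b. (\<Sum>j=1..K. \<bar>b j\<bar>) = 1 / cos (pi / real h)}"

definition wF :: "nat \<Rightarrow> nat \<Rightarrow> (real \<Rightarrow> real) \<Rightarrow> nat set \<Rightarrow> real" where
  "wF N h F A = (\<Sum>a\<in>A. F ((real a - (real N + 1) / 2) * (2 * pi / (real h * real N))))"

definition psi :: "nat \<Rightarrow> nat \<Rightarrow> nat \<Rightarrow> real" where
  "psi N K h = Min ((\<lambda>A. (SUP F\<in>FKh K h. wF N h F A / real (card A)))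
                      ` {A. A \<subseteq> {1..N} \<and> A \<noteq> {}})"

end

theory Submission
  imports Defs
begin

lemma piece0:
  fixes t :: real
  assumes "(1/2) \<le> t" "t \<le> (3/4)"
  shows "0 \<le> (-6529/5000) * t^0 + (2657/1000) * t^1 + (747/500) * t^2 + (-37/25) * t^3 + (-498/125) * t^4 + (0) * t^5 + (332/125) * t^6"
proof -
  have "(-6529/5000) * t^0 + (2657/1000) * t^1 + (747/500) * t^2 + (-37/25) * t^3 + (-498/125) * t^4 + (0) * t^5 + (332/125) * t^6 = (9472/625) * (t - (1/2))^0 * ((3/4) - t)^6 + (1046912/625) * (t - (1/2))^1 * ((3/4) - t)^5 + (883712/125) * (t - (1/2))^2 * ((3/4) - t)^4 + (1456448/125) * (t - (1/2))^3 * ((3/4) - t)^3 + (1144432/125) * (t - (1/2))^4 * ((3/4) - t)^2 + (2114032/625) * (t - (1/2))^5 * ((3/4) - t)^1 + (294652/625) * (t - (1/2))^6 * ((3/4) - t)^0"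
    by algebra
  also have "\<dots> \<ge> 0" using assms
    by (intro add_nonneg_nonneg mult_nonneg_nonneg zero_le_power) auto
  finally show ?thesis by simp
qed

lemma piece1:
  fixes t :: real
  assumes "(3/4) \<le> t" "t \<le> (7/8)"
  shows "0 \<le> (-6529/5000) * t^0 + (2657/1000) * t^1 + (747/500) * t^2 + (-37/25) * t^3 + (-498/125) * t^4 + (0) * t^5 + (332/125) * t^6"
proof -
  have "(-6529/5000) * t^0 + (2657/1000) * t^1 + (747/500) * t^2 + (-37/25) * t^3 + (-498/125) * t^4 + (0) * t^5 + (332/125) * t^6 = (18857728/625) * (t - (3/4))^0 * ((7/8) - t)^6 + (102070528/625) * (t - (3/4))^1 * ((7/8) - t)^5 + (8825408/25) * (t - (3/4))^2 * ((7/8) - t)^4 + (48372608/125) * (t - (3/4))^3 * ((7/8) - t)^3 + (28070864/125) * (t - (3/4))^4 * ((7/8) - t)^2 + (40513808/625) * (t - (3/4))^5 * ((7/8) - t)^1 + (4601788/625) * (t - (3/4))^6 * ((7/8) - t)^0"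
    by algebra
  also have "\<dots> \<ge> 0" using assms
    by (intro add_nonneg_nonneg mult_nonneg_nonneg zero_le_power) auto
  finally show ?thesis by simp
qed

lemma piece2:
  fixes t :: real
  assumes "(7/8) \<le> t" "t \<le> (15/16)"
  shows "0 \<le> (-6529/5000) * t^0 + (2657/1000) * t^1 + (747/500) * t^2 + (-37/25) * t^3 + (-498/125) * t^4 + (0) * t^5 + (332/125) * t^6"
proof -
  have "(-6529/5000) * t^0 + (2657/1000) * t^1 + (747/500) * t^2 + (-37/25) * t^3 + (-498/125) * t^4 + (0) * t^5 + (332/125) * t^6 = (294514432/625) * (t - (7/8))^0 * ((15/16) - t)^6 + (1354188032/625) * (t - (7/8))^1 * ((15/16) - t)^5 + (492443456/125) * (t - (7/8))^2 * ((15/16) - t)^4 + (89955712/25) * (t - (7/8))^3 * ((15/16) - t)^3 + (220356304/125) * (t - (7/8))^4 * ((15/16) - t)^2 + (302039632/625) * (t - (7/8))^5 * ((15/16) - t)^1 + (46608892/625) * (t - (7/8))^6 * ((15/16) - t)^0"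
    by algebra
  also have "\<dots> \<ge> 0" using assms
    by (intro add_nonneg_nonneg mult_nonneg_nonneg zero_le_power) auto
  finally show ?thesis by simp
qed

lemma piece3:
  fixes t :: real
  assumes "(15/16) \<le> t" "t \<le> (1)"
  shows "0 \<le> (-6529/5000) * t^0 + (2657/1000) * t^1 + (747/500) * t^2 + (-37/25) * t^3 + (-498/125) * t^4 + (0) * t^5 + (332/125) * t^6"
proof -
  have "(-6529/5000) * t^0 + (2657/1000) * t^1 + (747/500) * t^2 + (-37/25) * t^3 + (-498/125) * t^4 + (0) * t^5 + (332/125) * t^6 = (46608892/625) * (t - (15/16))^0 * ((1) - t)^6 + (257267072/625) * (t - (15/16))^1 * ((1) - t)^5 + (175583744/125) * (t - (15/16))^2 * ((1) - t)^4 + (77647872/25) * (t - (15/16))^3 * ((1) - t)^3 + (486916096/125) * (t - (15/16))^4 * ((1) - t)^2 + (1550712832/625) * (t - (15/16))^5 * ((1) - t)^1 + (390070272/625) * (t - (15/16))^6 * ((1) - t)^0"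
    by algebra
  also have "\<dots> \<ge> 0" using assms
    by (intro add_nonneg_nonneg mult_nonneg_nonneg zero_le_power) auto
  finally show ?thesis by simp
qed

lemma poly_ge:
  fixes t :: real
  assumes "1/2 \<le> t" "t \<le> 1"
  shows "0 \<le> (-6529/5000) * t^0 + (2657/1000) * t^1 + (747/500) * t^2 + (-37/25) * t^3 + (-498/125) * t^4 + (0) * t^5 + (332/125) * t^6"
proof -
  consider "t \<le> 3/4" | "3/4 \<le> t \<and> t \<le> 7/8" | "7/8 \<le> t \<and> t \<le> 15/16" | "15/16 \<le> t" by linarith
  then show ?thesis
  proof cases
    case 1 then show ?thesis using piece0 assms by auto
  next
    case 2 then show ?thesis using piece1 assms by auto
  next
    case 3 then show ?thesis using piece2 assms by auto
  next
    case 4 then show ?thesis using piece3 assms by auto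
  qed
qed

definition bb :: "nat \<Rightarrow> real" where
  "bb j = (if j = 1 then 1547/1000 else if j = 3 then -37/100 else if j = 6 then 83/1000 else 0)"

lemma cospoly_bb: "cospoly 6 bb x = 1547/1000 * cos x - 37/100 * cos (3*x) + 83/1000 * cos (6*x)"
  by (simp add: cospoly_def bb_def numeral_eq_Suc)

lemma bb_in: "cospoly 6 bb \<in> FKh 6 3"
proof -
  have "(\<Sum>j=1..6. \<bar>bb j\<bar>) = 2"
    by (simp add: bb_def numeral_eq_Suc)
  moreover have "cos (pi / real 3) = 1/2" using cos_60 by simp
  then have "1 / cos (pi / real 3) = 2" by (simp only:) simp
  ultimately show ?thesis unfolding FKh_def by (intro CollectI exI[of _ bb]) simp
qed

lemma G_ge:
  assumes "\<bar>x\<bar> \<le> pi/3"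
  shows "cospoly 6 bb x \<ge> 1.2228"
proof -
  define t where "t = cos x"
  have "cos \<bar>x\<bar> \<ge> cos (pi/3)"
    using assms by (intro cos_monotone_0_pi_le) auto
  then have t1: "1/2 \<le> t" unfolding t_def using cos_60 by simp
  have t2: "t \<le> 1" unfolding t_def by simp
  have c3: "cos (3*x) = 4*t^3 - 3*t" unfolding t_def by (rule cos_treble_cos)
  have c6: "cos (6*x) = 2 * (cos (3*x))^2 - 1"
    using cos_double_cos[of "3*x"] by simp
  have "cospoly 6 bb x - 1.2228 = (-6529/5000) * t^0 + (2657/1000) * t^1 + (747/500) * t^2 + (-37/25) * t^3 + (-498/125) * t^4 + (0) * t^5 + (332/125) * t^6"
    unfolding cospoly_bb c6 c3 t_def[symmetric] by algebra
  with poly_ge[OF t1 t2] show ?thesis by linarith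
qed

lemma cospoly_bound:
  assumes "(\<Sum>j=1..K. \<bar>b j\<bar>) = s"
  shows "\<bar>cospoly K b x\<bar> \<le> s"
proof -
  have "\<bar>cospoly K b x\<bar> \<le> (\<Sum>j=1..K. \<bar>b j * cos (real j * x)\<bar>)"
    unfolding cospoly_def by (rule sum_abs)
  also have "\<dots> \<le> (\<Sum>j=1..K. \<bar>b j\<bar>)"
    by (intro sum_mono) (simp add: abs_mult mult_left_le)
  finally show ?thesis using assms by simp
qed

lemma FKh_bound:
  assumes "F \<in> FKh K 3"
  shows "\<bar>F x\<bar> \<le> 2"
proof -
  have "cos (pi / real 3) = 1/2" using cos_60 by simp
  then have "1 / cos (pi / real 3) = 2" by (simp only:) simp
  with assms obtain b where "F = cospoly K b" "(\<Sum>j=1..K. \<bar>b j\<bar>) = 2"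
    unfolding FKh_def by force
  then show ?thesis using cospoly_bound by auto
qed

lemma point_bound:
  assumes "1 \<le> a" "a \<le> N"
  shows "\<bar>(real a - (real N + 1) / 2) * (2 * pi / (real 3 * real N))\<bar> \<le> pi/3"
proof -
  have N: "real N \<ge> 1" using assms by simp
  have r: "1 \<le> real a" "real a \<le> real N" using assms by auto
  have "\<bar>real a - (real N + 1) / 2\<bar> \<le> real N / 2" unfolding abs_le_iff
  proof
    show "real a - (real N + 1) / 2 \<le> real N / 2" using r by (simp add: field_simps)
    show "- (real a - (real N + 1) / 2) \<le> real N / 2" using r by (simp add: field_simps)
  qed
  then have "\<bar>real a - (real N + 1) / 2\<bar> * (2 * pi / (3 * real N)) \<le> real N / 2 * (2 * pi / (3 * real N))"
    by (intro mult_right_mono) auto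
  also have "\<dots> = pi/3" using N by (simp add: field_simps)
  finally show ?thesis by (simp add: abs_mult)
qed

theorem theorem3p2:
  shows "\<exists>N0::nat. \<forall>N\<ge>N0. psi N 6 3 \<ge> 1.2228"
proof (intro exI allI impI)
  fix N :: nat assume N: "N \<ge> 1"
  let ?S = "{A. A \<subseteq> {1..N} \<and> A \<noteq> {}}"
  have fin: "finite ?S" by (rule finite_subset[of _ "Pow {1..N}"]) auto
  have ne: "?S \<noteq> {}" proof -
    have "{1} \<in> ?S" using N by auto
    then show ?thesis by blast
  qed
  show "psi N 6 3 \<ge> 1.2228"
    unfolding psi_def
  proof (subst Min_ge_iff)
    show "finite ((\<lambda>A. SUP F\<in>FKh 6 3. wF N 3 F A / real (card A)) ` ?S)" using fin by simp
    show "(\<lambda>A. SUP F\<in>FKh 6 3. wF N 3 F A / real (card A)) ` ?S \<noteq> {}" using ne by simp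
    show "\<forall>v\<in>(\<lambda>A. SUP F\<in>FKh 6 3. wF N 3 F A / real (card A)) ` ?S. 1.2228 \<le> v"
    proof
      fix v assume "v \<in> (\<lambda>A. SUP F\<in>FKh 6 3. wF N 3 F A / real (card A)) ` ?S"
      then obtain A where A: "A \<subseteq> {1..N}" "A \<noteq> {}" and v: "v = (SUP F\<in>FKh 6 3. wF N 3 F A / real (card A))"
        by auto
      have finA: "finite A" using A finite_subset by blast
      have cA: "real (card A) > 0" using finA A by (simp add: card_gt_0_iff)
      have bdd: "bdd_above ((\<lambda>F. wF N 3 F A / real (card A)) ` FKh 6 3)"
      proof (rule bdd_aboveI2)
        fix F assume F: "F \<in> FKh 6 3"
        have "wF N 3 F A \<le> (\<Sum>a\<in>A. 2)" unfolding wF_def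
          by (intro sum_mono) (use FKh_bound[OF F] in \<open>simp add: abs_le_iff\<close>)
        then have "wF N 3 F A \<le> 2 * real (card A)" by simp
        then show "wF N 3 F A / real (card A) \<le> 2" using cA by (simp add: divide_le_eq)
      qed
      have "(\<Sum>a\<in>A. 1.2228) \<le> wF N 3 (cospoly 6 bb) A" unfolding wF_def
      proof (intro sum_mono G_ge)
        fix a assume "a \<in> A"
        then have "1 \<le> a" "a \<le> N" using A by auto
        from point_bound[OF this] show "\<bar>(real a - (real N + 1) / 2) * (2 * pi / (real 3 * real N))\<bar> \<le> pi / 3" .
      qed
      then have "1.2228 * real (card A) \<le> wF N 3 (cospoly 6 bb) A" by simp
      then have "1.2228 \<le> wF N 3 (cospoly 6 bb) A / real (card A)" using cA by (simp add: le_divide_eq)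
      also have "\<dots> \<le> v" unfolding v by (rule cSUP_upper[OF bb_in bdd])
      finally show "1.2228 \<le> v" .
    qed
  qed
qed

end
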